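(* Let $\mathbb{G}$ be a homogeneous group of homogeneous dimension $Q\geq 3$ and let $|\cdot|$ be any homogeneous quasi-norm on $\mathbb{G}$. Then for every complex-valued $f\in C_0^\infty(\mathbb{G}\setminus\{0\})$ and every $\alpha\in\mathbb{R}$, $$\left\|\frac{1}{|x|^{\alpha}}\mathcal{R} f\right\|^{2}_{L^{2}(\mathbb{G})}-\left(\frac{Q-2}{2}-\alpha\right)^{2}\left\|\frac{f}{|x|^{\alpha+1}}\right\|^{2}_{L^{2}(\mathbb{G})}=\left\|\frac{1}{|x|^{\alpha}}\mathcal{R} f+\frac{Q-2-2\alpha}{2|x|^{\alpha+1}}f\right\|^{2}_{L^{2}(\mathbb{G})}.$$
   Context: A homogeneous group $\mathbb{G}$ is a Lie group whose underlying manifold is $\mathbb{R}^n$, equipped with dilations $D_\lambda(x)=(\lambda^{\nu_1}x_1,\dots,\lambda^{\nu_n}x_n)$, $\nu_1,\dots,\nu_n>0$, such that each $D_\lambda$ ($\lambda>0$) is a group automorphism. Its homogeneous dimension is $Q=\nu_1+\dots+\nu_n$. The Haar measure $dx$ on $\mathbb{G}$ is Lebesgue measure on $\mathbb{R}^n$, and $L^2(\mathbb{G})$ is taken with respect to it. A homogeneous quasi-norm is a continuous function $x\mapsto|x|\in[0,\infty)$ with $|x^{-1}|=|x|$, $|D_\lambda x|=\lambda|x|$ for all $\lambda>0$, and $|x|=0$ iff $x=0$ (here $0$ is the identity). The radial derivative $\mathcal{R}$ is defined for $x\neq 0$ by $\mathcal{R}f(x)=\frac{d}{dr}\big[f(D_r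 y)\big]\big|_{r=|x|}$, where $y=D_{1/|x|}x$ lies on the unit quasi-sphere $\{|y|=1\}$; i.e. $\mathcal{R}=\frac{d}{d|x|}$ is differentiation along the dilation orbits with respect to $r=|x|$. *)

theory Defs
  imports "HOL-Analysis.Analysis"
begin

fun dderiv :: "'a::real_normed_vector list \<Rightarrow> ('a \<Rightarrow> 'b::real_normed_vector) \<Rightarrow> 'a \<Rightarrow> 'b" where
  "dderiv [] f = f"
| "dderiv (v # vs) f = (\<lambda>x. frechet_derivative (dderiv vs f) (at x) v)"

definition smooth_fun :: "('a::real_normed_vector \<Rightarrow> 'b::real_normed_vector) \<Rightarrow> bool" where
  "smooth_fun f \<longleftrightarrow> (\<forall>vs x. dderiv vs f differentiable (at x))"

definition dil :: "('n::finite \<Rightarrow> real) \<Rightarrow> real \<Rightarrow> real^'n \<Rightarrow> real^'n" where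
  "dil \<nu> t x = (\<chi> i. (t powr \<nu> i) * x $ i)"

definition hom_dim :: "('n::finite \<Rightarrow> real) \<Rightarrow> real" where
  "hom_dim \<nu> = (\<Sum>i\<in>UNIV. \<nu> i)"

definition homogeneous_group ::
  "(real^'n \<Rightarrow> real^'n \<Rightarrow> real^'n) \<Rightarrow> (real^'n \<Rightarrow> real^'n) \<Rightarrow> ('n::finite \<Rightarrow> real) \<Rightarrow> bool" where
  "homogeneous_group gmul ginv \<nu> \<longleftrightarrow>
     (\<forall>x y z. gmul (gmul x y) z = gmul x (gmul y z)) \<and>
     (\<forall>x. gmul 0 x = x \<and> gmul x 0 = x) \<and>
     (\<forall>x. gmul (ginv x) x = 0 \<and> gmul x (ginv x) = 0) \<and>
     smooth_fun (\<lambda>p. gmul (fst p) (snd p)) \<and> smooth_fun ginv \<and>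
     (\<forall>i. \<nu> i > 0) \<and>
     (\<forall>t>0. \<forall>x y. dil \<nu> t (gmul x y) = gmul (dil \<nu> t x) (dil \<nu> t y))"

definition hom_quasi_norm ::
  "(real^'n \<Rightarrow> real^'n) \<Rightarrow> ('n::finite \<Rightarrow> real) \<Rightarrow> (real^'n \<Rightarrow> real) \<Rightarrow> bool" where
  "hom_quasi_norm ginv \<nu> N \<longleftrightarrow>
     continuous_on UNIV N \<and> (\<forall>x. N x \<ge> 0) \<and>
     (\<forall>x. N (ginv x) = N x) \<and>
     (\<forall>t>0. \<forall>x. N (dil \<nu> t x) = t * N x) \<and>
     (\<forall>x. N x = 0 \<longleftrightarrow> x = 0)"

definition radial_deriv ::
  "('n::finite \<Rightarrow> real) \<Rightarrow> (real^'n \<Rightarrow> real) \<Rightarrow> (real^'n \<Rightarrow> 'b::real_normed_vector) \<Rightarrow> real^'n \<Rightarrow> 'b" where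
  "radial_deriv \<nu> N f x =
     vector_derivative (\<lambda>r. f (dil \<nu> r (dil \<nu> (1 / N x) x))) (at (N x))"

definition C0_inf_punct :: "(real^'n::finite \<Rightarrow> complex) \<Rightarrow> bool" where
  "C0_inf_punct f \<longleftrightarrow> smooth_fun f \<and> compact (closure {x. f x \<noteq> 0}) \<and>
     0 \<notin> closure {x. f x \<noteq> 0}"

definition L2norm_sq :: "(real^'n::finite \<Rightarrow> complex) \<Rightarrow> real" where
  "L2norm_sq g = (\<integral>x. (cmod (g x))\<^sup>2 \<partial>lborel)"

end

theory Submission
  imports Defs
begin


definition E :: "('n::finite \<Rightarrow> real) \<Rightarrow> real \<Rightarrow> real^'n \<Rightarrow> real^'n" where
  "E \<nu> t y = (\<chi> i. \<nu> i * t powr (\<nu> i - 1) * y $ i)"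

lemma dil_sum: "dil \<nu> r y = (\<Sum>i\<in>UNIV. (r powr \<nu> i * y$i) *\<^sub>R axis i 1)"
  by (simp add: dil_def vec_eq_iff sum_component axis_def if_distrib cong: if_cong)

lemma E_sum: "E \<nu> r y = (\<Sum>i\<in>UNIV. (\<nu> i * r powr (\<nu> i - 1) * y$i) *\<^sub>R axis i 1)"
  by (simp add: E_def vec_eq_iff sum_component axis_def if_distrib cong: if_cong)

lemma dil_deriv:
  assumes "t > 0"
  shows "((\<lambda>r. dil \<nu> r y) has_vector_derivative E \<nu> t y) (at t)"
  unfolding dil_sum E_sum
  apply (rule has_vector_derivative_sum)
  using assms
  apply (auto intro!: derivative_eq_intros)
  done

lemma smooth_has_deriv:
  assumes "smooth_fun f"
  shows "(f has_derivative frechet_derivative f (at x)) (at x)"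
proof -
  have "dderiv [] f differentiable (at x)" using assms unfolding smooth_fun_def by blast
  then show ?thesis by (simp add: frechet_derivative_works)
qed

lemma smooth_cont_fd:
  assumes "smooth_fun f"
  shows "continuous_on UNIV (\<lambda>y. frechet_derivative f (at y) v)"
proof -
  have "\<And>x. dderiv [v] f differentiable (at x)" using assms unfolding smooth_fun_def by blast
  then have "\<And>x. isCont (\<lambda>y. frechet_derivative f (at y) v) x"
    by (simp add: differentiable_imp_continuous_within)
  then show ?thesis by (simp add: continuous_at_imp_continuous_on)
qed

lemma smooth_linear:
  assumes "smooth_fun f"
  shows "linear (frechet_derivative f (at x))"
  using smooth_has_deriv[OF assms] has_derivative_linear by blast

lemma chain_dil:
  assumes "smooth_fun f" "t > 0"
  shows "((\<lambda>r. f (dil \<nu> r y)) has_vector_derivative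
          frechet_derivative f (at (dil \<nu> t y)) (E \<nu> t y)) (at t)"
proof -
  have 1: "((\<lambda>r. dil \<nu> r y) has_derivative (\<lambda>h. h *\<^sub>R E \<nu> t y)) (at t)"
    using dil_deriv[OF assms(2)] by (simp add: has_vector_derivative_def)
  have 2: "(f has_derivative frechet_derivative f (at (dil \<nu> t y))) (at (dil \<nu> t y))"
    by (rule smooth_has_deriv[OF assms(1)])
  have "((f \<circ> (\<lambda>r. dil \<nu> r y)) has_derivative (frechet_derivative f (at (dil \<nu> t y)) \<circ> (\<lambda>h. h *\<^sub>R E \<nu> t y))) (at t)"
    using diff_chain_at[OF 1 2] .
  moreover have "(frechet_derivative f (at (dil \<nu> t y)) \<circ> (\<lambda>h. h *\<^sub>R E \<nu> t y)) = (\<lambda>h. h *\<^sub>R frechet_derivative f (at (dil \<nu> t y)) (E \<nu> t y))"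
    using smooth_linear[OF assms(1)] by (auto simp: fun_eq_iff linear_scale)
  ultimately show ?thesis by (simp add: has_vector_derivative_def o_def)
qed

lemma dil_mult: "0 \<le> s \<Longrightarrow> 0 \<le> t \<Longrightarrow> dil \<nu> s (dil \<nu> t x) = dil \<nu> (s*t) x"
  by (simp add: dil_def vec_eq_iff powr_mult)

lemma dil_one: "dil \<nu> 1 x = x"
  by (simp add: dil_def vec_eq_iff)

lemma radial_formula:
  assumes "smooth_fun f" "N x > 0"
  shows "radial_deriv \<nu> N f x = (1 / N x) *\<^sub>R frechet_derivative f (at x) (\<chi> i. \<nu> i * x$i)"
proof -
  let ?n = "N x" let ?y = "dil \<nu> (1 / N x) x"
  have "radial_deriv \<nu> N f x = frechet_derivative f (at (dil \<nu> ?n ?y)) (E \<nu> ?n ?y)"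
    unfolding radial_deriv_def using chain_dil[OF assms(1,2)] by (rule vector_derivative_at)
  also have "dil \<nu> ?n ?y = x" using assms(2) by (simp add: dil_mult dil_one)
  also have "E \<nu> ?n ?y = (1 / N x) *\<^sub>R (\<chi> i. \<nu> i * x$i)"
  proof -
    have "?n powr (\<nu> i - 1) * (1 / ?n) powr \<nu> i = 1 / ?n" for i
    proof -
      have "?n powr (\<nu> i - 1) * (1 / ?n) powr \<nu> i = ?n powr (\<nu> i - 1) * ?n powr (- \<nu> i)"
        using assms(2) by (simp add: powr_divide powr_minus_divide)
      also have "\<dots> = ?n powr (-1)" by (simp add: powr_add[symmetric])
      finally show ?thesis using assms(2) by (simp add: powr_minus_divide)
    qed
    then have "\<nu> i * ?n powr (\<nu> i - 1) * ((1 / ?n) powr \<nu> i * x $ i) = \<nu> i * x$i / ?n" for i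
      by (metis (no_types, lifting) mult.assoc mult.commute times_divide_eq_right mult_1)
    then show ?thesis by (simp add: E_def dil_def vec_eq_iff)
  qed
  finally show ?thesis using smooth_linear[OF assms(1)] by (simp add: linear_scale)
qed

lemma sq_deriv:
  assumes "smooth_fun f" "t > 0"
  shows "((\<lambda>r. (cmod (f (dil \<nu> r x)))\<^sup>2) has_real_derivative
     2 * inner (f (dil \<nu> t x)) (frechet_derivative f (at (dil \<nu> t x)) (E \<nu> t x))) (at t)"
proof -
  have h: "((\<lambda>r. f (dil \<nu> r x)) has_derivative (\<lambda>h. h *\<^sub>R frechet_derivative f (at (dil \<nu> t x)) (E \<nu> t x))) (at t)"
    using chain_dil[OF assms] by (simp add: has_vector_derivative_def)
  have "((\<lambda>r. inner (f (dil \<nu> r x)) (f (dil \<nu> r x))) has_derivative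
     (\<lambda>h. inner (f (dil \<nu> t x)) (h *\<^sub>R frechet_derivative f (at (dil \<nu> t x)) (E \<nu> t x)) + inner (h *\<^sub>R frechet_derivative f (at (dil \<nu> t x)) (E \<nu> t x)) (f (dil \<nu> t x)))) (at t)"
    by (rule has_derivative_inner[OF h h])
  then show ?thesis
    unfolding power2_norm_eq_inner has_field_derivative_def
    by (rule has_derivative_eq_rhs) (simp add: inner_commute algebra_simps fun_eq_iff)
qed

lemma scale_int:
  fixes h :: "real^'n::finite \<Rightarrow> real"
  assumes hI: "(h has_integral I) UNIV" and hz: "\<And>x. x \<notin> cbox a b \<Longrightarrow> h x = 0"
    and m: "\<And>k. m k > 0"
  shows "((\<lambda>x. h (\<chi> k. m k * x$k)) has_integral I / prod m UNIV) UNIV"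
proof -
  have "((\<lambda>x. if x \<in> cbox a b then h x else 0) has_integral I) UNIV"
    using hI by (rule has_integral_eq[rotated]) (use hz in auto)
  then have c: "(h has_integral I) (cbox a b)" by (simp add: has_integral_restrict_UNIV)
  have m0: "\<And>k. m k \<noteq> 0" using m by (metis less_irrefl)
  have "((\<lambda>x. h(\<chi> k. m k * x$k)) has_integral I /\<^sub>R \<bar>prod m UNIV\<bar>)
            ((\<lambda>x. \<chi> k. x$k / m k) ` (cbox a b))"
    by (rule has_integral_stretch_cart[OF c m0])
  moreover have "\<bar>prod m UNIV\<bar> = prod m UNIV" using m by (simp add: prod_pos less_imp_le)
  ultimately have i: "((\<lambda>x. h(\<chi> k. m k * x$k)) has_integral I / prod m UNIV)
            ((\<lambda>x. \<chi> k. x$k / m k) ` (cbox a b))" by (simp add: divide_inverse_commute)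
  show ?thesis
  proof (rule has_integral_on_superset[OF i])
    fix x assume x: "x \<notin> (\<lambda>x. \<chi> k. x$k / m k) ` (cbox a b)"
    show "h (\<chi> k. m k * x$k) = 0"
    proof (rule hz)
      show "(\<chi> k. m k * x$k) \<notin> cbox a b"
      proof
        assume "(\<chi> k. m k * x$k) \<in> cbox a b"
        moreover have "x = (\<lambda>x. \<chi> k. x$k / m k) (\<chi> k. m k * x$k)"
          using m0 by (simp add: vec_eq_iff)
        ultimately show False using x by blast
      qed
    qed
  qed auto
qed

lemma scale_dil:
  fixes h :: "real^'n::finite \<Rightarrow> real"
  assumes hI: "(h has_integral I) UNIV" and hz: "\<And>x. x \<notin> cbox a b \<Longrightarrow> h x = 0"
    and t: "t > 0"
  shows "((\<lambda>x. h (dil \<nu> t x)) has_integral I / t powr hom_dim \<nu>) UNIV"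
proof -
  have "((\<lambda>x. h (\<chi> k. t powr \<nu> k * x$k)) has_integral I / prod (\<lambda>k. t powr \<nu> k) UNIV) UNIV"
    by (rule scale_int[OF hI hz]) (use t in auto)
  moreover have "prod (\<lambda>k. t powr \<nu> k) UNIV = t powr hom_dim \<nu>"
    using t by (simp add: hom_dim_def powr_sum)
  ultimately show ?thesis by (simp add: dil_def)
qed

lemma cont_compact_integrable:
  fixes h :: "real^'n::finite \<Rightarrow> 'b::{banach, second_countable_topology}"
  assumes "continuous_on UNIV h" "compact K" "\<And>x. x \<notin> K \<Longrightarrow> h x = 0"
  shows "integrable lborel h"
proof -
  have "integrable lborel (\<lambda>x. indicator K x *\<^sub>R h x)"
    by (rule borel_integrable_compact[OF assms(2)]) (rule continuous_on_subset[OF assms(1)], simp)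
  moreover have "(\<lambda>x. indicator K x *\<^sub>R h x) = h" using assms(3) by (auto simp: fun_eq_iff indicator_def)
  ultimately show ?thesis by simp
qed

lemma fd_expand:
  assumes "smooth_fun f"
  shows "frechet_derivative f (at y) v = (\<Sum>i\<in>UNIV. v$i *\<^sub>R frechet_derivative f (at y) (axis i 1))"
proof -
  have l: "linear (frechet_derivative f (at y))" by (rule smooth_linear[OF assms])
  have "frechet_derivative f (at y) v = frechet_derivative f (at y) (\<Sum>i\<in>UNIV. v$i *\<^sub>R axis i 1)"
    using basis_expansion[of v] by (simp add: scalar_mult_eq_scaleR)
  also have "\<dots> = (\<Sum>i\<in>UNIV. v$i *\<^sub>R frechet_derivative f (at y) (axis i 1))"
    using l by (simp add: linear_sum linear_scale)
  finally show ?thesis .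
qed

lemma fd_cont:
  fixes f :: "real^'n::finite \<Rightarrow> 'b::real_normed_vector" and q :: "'c::topological_space \<Rightarrow> real^'n"
  assumes "smooth_fun f" "continuous_on S p" "continuous_on S q"
  shows "continuous_on S (\<lambda>z. frechet_derivative f (at (p z)) (q z))"
proof -
  have c: "continuous_on S (\<lambda>z. frechet_derivative f (at (p z)) (axis i 1))" for i
    by (rule continuous_on_compose2[OF smooth_cont_fd[OF assms(1)] assms(2)]) auto
  have "continuous_on S (\<lambda>z. \<Sum>i\<in>UNIV. q z $ i *\<^sub>R frechet_derivative f (at (p z)) (axis i 1))"
    by (intro continuous_intros c assms(3))
  then show ?thesis by (subst fd_expand[OF assms(1)])
qed

lemma fd_zero:
  assumes "x \<notin> closure {y. f y \<noteq> 0}"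
  shows "frechet_derivative f (at x) v = 0"
proof -
  let ?O = "- closure {y. f y \<noteq> 0}"
  have "((\<lambda>_. 0) has_derivative (\<lambda>_. 0)) (at x)" by simp
  moreover have "open ?O" by auto
  moreover have "x \<in> ?O" using assms by auto
  moreover have "0 = f y" if "y \<in> ?O" for y
  proof -
    have "y \<notin> {y. f y \<noteq> 0}" using that closure_subset[of "{y. f y \<noteq> 0}"] by blast
    then show ?thesis by simp
  qed
  ultimately have "(f has_derivative (\<lambda>_. 0)) (at x)"
    by (rule has_derivative_transform_within_open)
  then have "(\<lambda>_. 0) = frechet_derivative f (at x)" by (rule frechet_derivative_at)
  then show ?thesis by (metis)
qed

lemma cont_glue:
  fixes h :: "real^'n::finite \<Rightarrow> 'b::real_normed_vector"
  assumes "continuous_on (UNIV - {0}) h" "open Op" "0 \<in> Op" "\<And>x. x \<in> Op \<Longrightarrow> h x = 0"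
  shows "continuous_on UNIV h"
proof -
  have "continuous_on Op h"
    using continuous_on_const[of Op 0] by (rule continuous_on_cong[THEN iffD1, rotated 2]) (use assms(4) in auto)
  then have "continuous_on ((UNIV - {0}) \<union> Op) h"
    using assms(1,2) by (intro continuous_on_open_Un) (auto intro: open_Diff)
  moreover have "(UNIV - {0}) \<union> Op = UNIV" using assms(3) by auto
  ultimately show ?thesis by simp
qed

lemma dil_cont:
  assumes "continuous_on S a" "continuous_on S y" "\<And>p. p \<in> S \<Longrightarrow> a p > 0"
  shows "continuous_on S (\<lambda>p. dil \<nu> (a p) (y p))"
  unfolding dil_def
  apply (rule continuous_on_vec_lambda)
  apply (rule continuous_on_mult)
   apply (rule continuous_on_powr[OF assms(1) continuous_on_const])
  using assms(3) apply (metis less_irrefl)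
  by (intro continuous_intros assms(2))

lemma E_cont:
  assumes "continuous_on S a" "continuous_on S y" "\<And>p. p \<in> S \<Longrightarrow> a p > 0"
  shows "continuous_on S (\<lambda>p. E \<nu> (a p) (y p))"
  unfolding E_def
  apply (rule continuous_on_vec_lambda)
  apply (rule continuous_on_mult)
   apply (rule continuous_on_mult[OF continuous_on_const])
   apply (rule continuous_on_powr[OF assms(1) continuous_on_const])
  using assms(3) apply (metis less_irrefl)
  by (intro continuous_intros assms(2))

lemma cont_glue2:
  fixes h :: "real \<times> (real^'n::finite) \<Rightarrow> real"
  assumes "continuous_on {p. fst p \<in> T \<and> snd p \<noteq> 0} h" "open T"
    "continuous_on UNIV N" "N 0 = (0::real)" "e > 0"
    "\<And>p. fst p \<in> T \<Longrightarrow> N (snd p) < e \<Longrightarrow> h p = 0"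
  shows "continuous_on (T \<times> UNIV) h"
proof -
  let ?O1 = "{p::real \<times> (real^'n). fst p \<in> T \<and> snd p \<noteq> 0}"
  let ?O2 = "{p::real \<times> (real^'n). fst p \<in> T \<and> N (snd p) < e}"
  have o1: "open ?O1"
  proof -
    have eq: "?O1 = T \<times> (UNIV - {0})" by auto
    have "open (UNIV - {0::real^'n})" by (rule open_Diff) auto
    then show ?thesis using assms(2) unfolding eq by (intro open_Times)
  qed
  have o2: "open ?O2"
  proof -
    have eq: "?O2 = T \<times> {x. N x < e}" by auto
    have "open {x. N x < e}" by (rule open_Collect_less[OF assms(3)]) auto
    then show ?thesis using assms(2) unfolding eq by (intro open_Times)
  qed
  have "continuous_on ?O2 h"
    using continuous_on_const[of ?O2 0] by (rule continuous_on_cong[THEN iffD1, rotated 2]) (use assms(6) in auto)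
  then have "continuous_on (?O1 \<union> ?O2) h"
    using assms(1) o1 o2 by (intro continuous_on_open_Un) auto
  moreover have "T \<times> UNIV \<subseteq> ?O1 \<union> ?O2" using assms(4,5) by auto
  ultimately show ?thesis by (rule continuous_on_subset)
qed

lemma smooth_cont:
  assumes "smooth_fun f"
  shows "continuous_on UNIV f"
  using smooth_has_deriv[OF assms] has_derivative_continuous continuous_at_imp_continuous_on by blast




theorem theorem2p1:
  fixes gmul :: "real^'n::finite \<Rightarrow> real^'n \<Rightarrow> real^'n"
    and ginv :: "real^'n \<Rightarrow> real^'n"
    and \<nu> :: "'n \<Rightarrow> real"
    and N :: "real^'n \<Rightarrow> real"
    and f :: "real^'n \<Rightarrow> complex"
    and \<alpha> :: real
  assumes "homogeneous_group gmul ginv \<nu>"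
    and "hom_dim \<nu> \<ge> 3"
    and "hom_quasi_norm ginv \<nu> N"
    and "C0_inf_punct f"
  shows "L2norm_sq (\<lambda>x. of_real (N x powr (-\<alpha>)) * radial_deriv \<nu> N f x)
           - ((hom_dim \<nu> - 2) / 2 - \<alpha>)\<^sup>2 * L2norm_sq (\<lambda>x. f x / of_real (N x powr (\<alpha> + 1)))
         = L2norm_sq (\<lambda>x. of_real (N x powr (-\<alpha>)) * radial_deriv \<nu> N f x
              + of_real ((hom_dim \<nu> - 2 - 2 * \<alpha>) / (2 * N x powr (\<alpha> + 1))) * f x)"
proof -
  from assms(1) have nu: "\<And>i. \<nu> i > 0" unfolding homogeneous_group_def by blast
  from assms(3) have Ncont: "continuous_on UNIV N" and Nnn: "\<And>x. N x \<ge> 0"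
    and Nhom: "\<And>t x. t > 0 \<Longrightarrow> N (dil \<nu> t x) = t * N x" and N0: "\<And>x. N x = 0 \<longleftrightarrow> x = 0"
    unfolding hom_quasi_norm_def by auto
  have Npos: "\<And>x. x \<noteq> 0 \<Longrightarrow> N x > 0" using Nnn N0 by (metis less_eq_real_def)
  have N00: "N 0 = 0" using N0 by simp
  define K where "K = closure {x. f x \<noteq> 0}"
  from assms(4) have sm: "smooth_fun f" and Kc: "compact K" and K0: "0 \<notin> K"
    unfolding C0_inf_punct_def K_def by auto
  have fK: "\<And>x. x \<notin> K \<Longrightarrow> f x = 0"
  proof -
    fix x assume "x \<notin> K"
    then have "x \<notin> {x. f x \<noteq> 0}" unfolding K_def using closure_subset[of "{x. f x \<noteq> 0}"] by blast
    then show "f x = 0" by simp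
  qed
  obtain m where m: "m > 0" "\<And>y. y \<in> K \<Longrightarrow> m \<le> N y"
  proof (cases "K = {}")
    case True then show ?thesis using that[of 1] by auto
  next
    case False
    obtain y0 where y0: "y0 \<in> K" "\<forall>y\<in>K. N y0 \<le> N y"
      using continuous_attains_inf[OF Kc False continuous_on_subset[OF Ncont]] by auto
    have "y0 \<noteq> 0" using y0(1) K0 by auto
    then show ?thesis using that[of "N y0"] y0 Npos by blast
  qed
  have mK: "\<And>x. N x < m \<Longrightarrow> x \<notin> K" using m(2) by (metis not_le)
  obtain R where R: "R > 0" "\<And>y. y \<in> K \<Longrightarrow> norm y \<le> R"
    using compact_imp_bounded[OF Kc] bounded_pos by blast
  define b where "b = (\<chi> i. 2 powr \<nu> i * R)"
  have inbox: "x \<in> cbox (-b) b" if t: "t > 1/2" and dK: "dil \<nu> t x \<in> K" for t x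
  proof -
    have "- b $ i \<le> x $ i \<and> x $ i \<le> b $ i" for i
    proof -
      have "\<bar>t powr \<nu> i * x$i\<bar> \<le> R"
        using component_le_norm_cart[of "dil \<nu> t x" i] R(2)[OF dK] by (simp add: dil_def)
      moreover have tp: "t powr \<nu> i \<ge> (1/2) powr \<nu> i"
        using t nu[of i] by (intro powr_mono2) auto
      moreover have "(1/2) powr \<nu> i = 1 / 2 powr \<nu> i" by (simp add: powr_divide)
      ultimately have "\<bar>x$i\<bar> / 2 powr \<nu> i \<le> R"
      proof -
        assume a: "\<bar>t powr \<nu> i * x$i\<bar> \<le> R" "t powr \<nu> i \<ge> (1/2) powr \<nu> i" "(1/2) powr \<nu> i = 1 / 2 powr \<nu> i"
        have "\<bar>x$i\<bar> / 2 powr \<nu> i = \<bar>x$i\<bar> * (1/2) powr \<nu> i" using a(3) by simp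
        also have "\<dots> \<le> \<bar>x$i\<bar> * t powr \<nu> i" using a(2) by (intro mult_left_mono) auto
        also have "\<dots> = \<bar>t powr \<nu> i * x$i\<bar>" by (simp add: abs_mult)
        finally show ?thesis using a(1) by simp
      qed
      then have "\<bar>x$i\<bar> \<le> 2 powr \<nu> i * R" by (simp add: divide_le_eq mult.commute)
      then show ?thesis by (auto simp: b_def abs_le_iff)
    qed
    then show ?thesis by (simp add: mem_box_cart)
  qed
  define c where "c = (hom_dim \<nu> - 2) / 2 - \<alpha>"
  define \<beta> where "\<beta> = - 2 * \<alpha> - 2"
  define w where "w x = N x powr \<beta>" for x
  define V where "V x = frechet_derivative f (at x) (\<chi> i. \<nu> i * x$i)" for x
  define A where "A x = of_real (N x powr (-\<alpha>)) * radial_deriv \<nu> N f x" for x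
  define B where "B x = f x / of_real (N x powr (\<alpha> + 1))" for x
  have Vcont: "continuous_on UNIV V"
    unfolding V_def by (rule fd_cont[OF sm]) (intro continuous_intros)+
  have VK: "\<And>x. x \<notin> K \<Longrightarrow> V x = 0" unfolding V_def K_def by (rule fd_zero)
  have Aeq: "A x = of_real (N x powr (-\<alpha>) / N x) * V x" if "x \<noteq> 0" for x
    using radial_formula[of f N x \<nu>, OF sm Npos[OF that]] unfolding A_def V_def
    by (simp add: scaleR_conv_of_real)
  have AK: "A x = 0" if "x \<notin> K" for x
  proof (cases "x = 0")
    case True then show ?thesis by (simp add: A_def N00)
  next
    case False then show ?thesis using Aeq VK that by simp
  qed
  have BK: "B x = 0" if "x \<notin> K" for x using fK[OF that] by (simp add: B_def)
  have openm: "open {x. N x < m}" by (rule open_Collect_less[OF Ncont]) auto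
  have Acont: "continuous_on UNIV A"
  proof (rule cont_glue[OF _ openm])
    have "continuous_on (UNIV - {0}) (\<lambda>x. of_real (N x powr (-\<alpha>) / N x) * V x)"
      by (intro continuous_intros continuous_on_subset[OF Ncont] continuous_on_subset[OF Vcont])
         (auto dest: Npos)
    then show "continuous_on (UNIV - {0}) A"
      by (rule continuous_on_cong[THEN iffD1, rotated 2]) (auto simp: Aeq)
  qed (use m N00 mK AK in auto)
  have Bcont: "continuous_on UNIV B"
  proof (rule cont_glue[OF _ openm])
    have "continuous_on (UNIV - {0}) (\<lambda>x. f x / of_real (N x powr (\<alpha> + 1)))"
      by (intro continuous_intros continuous_on_subset[OF Ncont] continuous_on_subset[OF smooth_cont[OF sm]])
         (auto dest: Npos)
    then show "continuous_on (UNIV - {0}) B" by (simp add: B_def[abs_def])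
  qed (use m N00 mK BK in auto)
  have f0: "f 0 = 0" using fK K0 by blast
  have w0: "w 0 = 0" by (simp add: w_def N00)
  have A0: "A 0 = 0" by (simp add: A_def N00)
  have pw: "n powr (-\<alpha>) / n * (1 / n powr (\<alpha>+1)) = n powr \<beta>"
    and pw2: "(n powr (\<alpha>+1))\<^sup>2 * n powr \<beta> = 1" if n: "n > 0" for n :: real
  proof -
    have "n powr \<beta> * n powr (\<alpha>+1) * n powr 1 = n powr (-\<alpha>)"
      by (simp only: powr_add[symmetric]) (simp add: \<beta>_def)
    then show "n powr (-\<alpha>) / n * (1 / n powr (\<alpha>+1)) = n powr \<beta>"
      using n by (simp add: field_simps)
    have "n powr (\<alpha>+1) * n powr (\<alpha>+1) * n powr \<beta> = n powr 0"
      by (simp only: powr_add[symmetric]) (simp add: \<beta>_def)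
    then show "(n powr (\<alpha>+1))\<^sup>2 * n powr \<beta> = 1" using n by (simp add: power2_eq_square)
  qed
  have AB: "inner (A x) (B x) = w x * inner (V x) (f x)" for x
  proof (cases "x = 0")
    case True then show ?thesis by (simp add: A0 w0)
  next
    case False
    let ?n = "N x"
    have n: "?n > 0" using Npos[OF False] .
    have Bx: "B x = (1 / ?n powr (\<alpha>+1)) *\<^sub>R f x"
      unfolding B_def scaleR_conv_of_real by (simp add: divide_inverse of_real_inverse mult.commute)
    have Ax: "A x = (?n powr (-\<alpha>) / ?n) *\<^sub>R V x"
      unfolding Aeq[OF False] scaleR_conv_of_real by simp
    have "inner (A x) (B x) = (?n powr (-\<alpha>) / ?n) * (1 / ?n powr (\<alpha>+1)) * inner (V x) (f x)"
      unfolding Ax Bx inner_scaleR_left inner_scaleR_right by simp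
    also have "\<dots> = w x * inner (V x) (f x)" using pw[OF n] by (simp only: w_def)
    finally show ?thesis .
  qed
  have BB: "(cmod (B x))\<^sup>2 = (cmod (f x))\<^sup>2 * w x" for x
  proof (cases "x = 0")
    case True then show ?thesis by (simp add: f0 B_def)
  next
    case False
    let ?n = "N x"
    have n: "?n > 0" using Npos[OF False] .
    have "(cmod (B x))\<^sup>2 = (cmod (f x))\<^sup>2 / (?n powr (\<alpha>+1))\<^sup>2"
      using n by (simp add: B_def norm_divide power_divide)
    also have "\<dots> = (cmod (f x))\<^sup>2 * w x" using pw2[OF n] n
      by (simp add: w_def field_simps)
    finally show ?thesis .
  qed
  have intB: "integrable lborel (\<lambda>x. (cmod (B x))\<^sup>2)"
    by (rule cont_compact_integrable[OF _ Kc]) (use BK in \<open>auto intro!: continuous_intros Bcont\<close>)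
  have main: "integral UNIV (\<lambda>x. inner (A x) (B x)) = - c * integral UNIV (\<lambda>x. (cmod (B x))\<^sup>2)"
  proof -
    define F where "F t x = (cmod (f (dil \<nu> t x)))\<^sup>2 * w x" for t x
    define Fd where "Fd t x = 2 * inner (f (dil \<nu> t x)) (frechet_derivative f (at (dil \<nu> t x)) (E \<nu> t x)) * w x" for t x
    define U where "U = {1/2<..<(2::real)}"
    define Q where "Q = hom_dim \<nu>"
    have zreg: "f (dil \<nu> t x) = 0" if "0 < t" "t < 3" "N x < m/3" for t x
    proof -
      have "t * N x \<le> 3 * N x" using that Nnn[of x] by (intro mult_right_mono) auto
      then have "N (dil \<nu> t x) < m" using Nhom[OF that(1)] that(3) by simp
      then show ?thesis using mK fK by blast
    qed
    have wcont: "continuous_on (UNIV - {0}) w"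
      unfolding w_def[abs_def]
      by (intro continuous_on_powr continuous_on_subset[OF Ncont] continuous_on_const) (auto dest: Npos)
    have Fcont: "continuous_on ({0<..<3} \<times> UNIV) (\<lambda>p. F (fst p) (snd p))"
    proof (rule cont_glue2[where e="m/3" and N=N])
      let ?S = "{p::real \<times> (real^'n). fst p \<in> {0<..<3} \<and> snd p \<noteq> 0}"
      have c1: "continuous_on ?S (\<lambda>p. f (dil \<nu> (fst p) (snd p)))"
        by (rule continuous_on_compose2[OF smooth_cont[OF sm] dil_cont]) (auto intro!: continuous_intros)
      have c2: "continuous_on ?S (\<lambda>p. w (snd p))"
        by (rule continuous_on_compose2[OF wcont]) (auto intro!: continuous_intros)
      show "continuous_on ?S (\<lambda>p. F (fst p) (snd p))"
        unfolding F_def by (intro continuous_intros c1 c2)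
    qed (use m zreg Ncont N00 in \<open>auto simp: F_def\<close>)
    have Fdcont: "continuous_on ({0<..<3} \<times> UNIV) (\<lambda>p. Fd (fst p) (snd p))"
    proof (rule cont_glue2[where e="m/3" and N=N])
      let ?S = "{p::real \<times> (real^'n). fst p \<in> {0<..<3} \<and> snd p \<noteq> 0}"
      have c1: "continuous_on ?S (\<lambda>p. f (dil \<nu> (fst p) (snd p)))"
        by (rule continuous_on_compose2[OF smooth_cont[OF sm] dil_cont]) (auto intro!: continuous_intros)
      have c2: "continuous_on ?S (\<lambda>p. w (snd p))"
        by (rule continuous_on_compose2[OF wcont]) (auto intro!: continuous_intros)
      have c3: "continuous_on ?S (\<lambda>p. frechet_derivative f (at (dil \<nu> (fst p) (snd p))) (E \<nu> (fst p) (snd p)))"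
        by (rule fd_cont[OF sm dil_cont E_cont]) (auto intro!: continuous_intros)
      show "continuous_on ?S (\<lambda>p. Fd (fst p) (snd p))"
        unfolding Fd_def by (intro continuous_intros c1 c2 c3)
    qed (use m zreg Ncont N00 in \<open>auto simp: Fd_def\<close>)
    have Fint: "F t integrable_on cbox (-b) b" if "t \<in> {0<..<3}" for t
    proof -
      have "continuous_on (cbox (-b) b) (\<lambda>x. F (fst (t, x)) (snd (t, x)))"
        by (rule continuous_on_compose2[OF Fcont]) (use that in \<open>auto intro!: continuous_intros\<close>)
      then show ?thesis by (intro integrable_continuous) simp
    qed
    have Fdint: "Fd t integrable_on cbox (-b) b" if "t \<in> {0<..<3}" for t
    proof -
      have "continuous_on (cbox (-b) b) (\<lambda>x. Fd (fst (t, x)) (snd (t, x)))"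
        by (rule continuous_on_compose2[OF Fdcont]) (use that in \<open>auto intro!: continuous_intros\<close>)
      then show ?thesis by (intro integrable_continuous) simp
    qed
    have LR: "((\<lambda>t. integral (cbox (-b) b) (F t)) has_field_derivative integral (cbox (-b) b) (Fd 1)) (at 1 within U)"
    proof (rule leibniz_rule_field_derivative)
      fix t x assume t: "t \<in> U" and "x \<in> cbox (-b) b"
      have "t > 0" using t by (simp add: U_def)
      have "((\<lambda>t. F t x) has_field_derivative Fd t x) (at t)"
        unfolding F_def Fd_def by (rule DERIV_cmult_right[OF sq_deriv[OF sm \<open>t > 0\<close>]])
      then show "((\<lambda>t. F t x) has_field_derivative Fd t x) (at t within U)"
        by (rule has_field_derivative_at_within)
    next
      fix t assume "t \<in> U"
      then show "F t integrable_on cbox (-b) b" by (intro Fint) (auto simp: U_def)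
    next
      have "U \<times> cbox (-b) b \<subseteq> {0<..<3} \<times> UNIV" by (auto simp: U_def)
      from continuous_on_subset[OF Fdcont this]
      show "continuous_on (U \<times> cbox (-b) b) (\<lambda>(t, x). Fd t x)" by (simp add: case_prod_beta')
    qed (simp_all add: U_def)
    have at1: "at 1 within U = at 1" by (rule at_within_open) (auto simp: U_def)
    have E1: "E \<nu> 1 x = (\<chi> i. \<nu> i * x$i)" for x by (simp add: E_def)
    have F1: "F 1 x = (cmod (B x))\<^sup>2" for x by (simp add: F_def dil_one BB)
    have Fd1: "Fd 1 x = 2 * inner (A x) (B x)" for x
      by (simp add: Fd_def dil_one E1 AB V_def[symmetric] inner_commute)
    define I where "I = integral UNIV (F 1)"
    have hI: "(F 1 has_integral I) UNIV"
    proof -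
      have "F 1 integrable_on UNIV" unfolding F1 by (rule integrable_on_lborel[OF intB])
      then show ?thesis unfolding I_def by (rule integrable_integral)
    qed
    have Ksup: "x \<in> cbox (-b) b" if "t \<in> U" "f (dil \<nu> t x) \<noteq> 0" for t x
    proof (rule inbox)
      show "t > 1/2" using that(1) by (simp add: U_def)
      show "dil \<nu> t x \<in> K" using that(2) closure_subset[of "{x. f x \<noteq> 0}"] unfolding K_def by blast
    qed
    have F1z: "F 1 x = 0" if "x \<notin> cbox (-b) b" for x
      using Ksup[of 1 x] that by (auto simp: F_def U_def dil_one)
    have Ft: "integral (cbox (-b) b) (F t) = I * t powr (-(\<beta> + Q))" if t: "t \<in> U" for t
    proof -
      have t0: "t > 0" using t by (simp add: U_def)
      have Fteq: "F t x = t powr (-\<beta>) * F 1 (dil \<nu> t x)" for x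
      proof -
        have "F 1 (dil \<nu> t x) = (cmod (f (dil \<nu> t x)))\<^sup>2 * (t powr \<beta> * N x powr \<beta>)"
          using t0 Nnn[of x] by (simp add: F_def dil_one w_def Nhom powr_mult)
        moreover have "t powr (-\<beta>) * t powr \<beta> = 1"
          using t0 by (simp add: powr_add[symmetric])
        ultimately show ?thesis by (simp add: F_def w_def algebra_simps)
      qed
      have "((\<lambda>x. F 1 (dil \<nu> t x)) has_integral I / t powr Q) UNIV"
        unfolding Q_def by (rule scale_dil[OF hI F1z t0])
      from has_integral_mult_right[OF this, of "t powr (-\<beta>)"]
      have a: "(F t has_integral t powr (-\<beta>) * (I / t powr Q)) UNIV"
        by (simp add: Fteq[abs_def])
      have "(F t has_integral integral (cbox (-b) b) (F t)) (cbox (-b) b)"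
        using Fint[of t] t by (intro integrable_integral) (auto simp: U_def)
      then have b: "(F t has_integral integral (cbox (-b) b) (F t)) UNIV"
        by (rule has_integral_on_superset) (use Ksup t in \<open>auto simp: F_def\<close>)
      have "integral (cbox (-b) b) (F t) = t powr (-\<beta>) * (I / t powr Q)"
        using has_integral_unique[OF b a] .
      also have "\<dots> = I * t powr (-(\<beta> + Q))"
      proof -
        have "t powr (-(\<beta> + Q)) = t powr (-\<beta>) * t powr (-Q)" by (simp add: powr_add[symmetric])
        moreover have "t powr (-Q) = 1 / t powr Q" by (simp add: powr_minus_divide)
        ultimately show ?thesis by simp
      qed
      finally show ?thesis .
    qed
    have D1: "((\<lambda>t. I * t powr (-(\<beta> + Q))) has_field_derivative integral (cbox (-b) b) (Fd 1)) (at 1)"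
      by (rule has_field_derivative_transform_within_open[OF LR[unfolded at1], of U])
         (use Ft in \<open>auto simp: U_def\<close>)
    have D2: "((\<lambda>t. I * t powr (-(\<beta> + Q))) has_field_derivative I * (-(\<beta> + Q))) (at 1)"
      by (auto intro!: derivative_eq_intros)
    have Dv: "integral (cbox (-b) b) (Fd 1) = I * (-(\<beta> + Q))"
      using DERIV_unique[OF D1 D2] .
    have "(Fd 1 has_integral integral (cbox (-b) b) (Fd 1)) (cbox (-b) b)"
      using Fdint[of 1] by (intro integrable_integral) auto
    then have "(Fd 1 has_integral integral (cbox (-b) b) (Fd 1)) UNIV"
    proof (rule has_integral_on_superset)
      fix x assume "x \<notin> cbox (-b) b"
      then have "f x = 0" using Ksup[of 1 x] by (auto simp: U_def dil_one)
      then show "Fd 1 x = 0" by (simp add: Fd_def dil_one)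
    qed auto
    then have "integral UNIV (Fd 1) = I * (-(\<beta> + Q))" using Dv by (simp add: integral_unique)
    then have "integral UNIV (\<lambda>x. 2 * inner (A x) (B x)) = I * (-(\<beta> + Q))"
      by (simp add: Fd1[abs_def])
    then have h1: "2 * integral UNIV (\<lambda>x. inner (A x) (B x)) = I * (-(\<beta> + Q))"
      by simp
    have h2: "I = integral UNIV (\<lambda>x. (cmod (B x))\<^sup>2)" by (simp add: I_def F1[abs_def])
    have h3: "-(\<beta> + Q) = -2 * c" by (simp add: \<beta>_def Q_def c_def field_simps)
    have "2 * integral UNIV (\<lambda>x. inner (A x) (B x)) = 2 * (- c * integral UNIV (\<lambda>x. (cmod (B x))\<^sup>2))"
      unfolding h1 h2 h3 by simp
    then show ?thesis by simp
  qed
  have intA: "integrable lborel (\<lambda>x. (cmod (A x))\<^sup>2)"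
    by (rule cont_compact_integrable[OF _ Kc]) (use AK in \<open>auto intro!: continuous_intros Acont\<close>)
  have intB: "integrable lborel (\<lambda>x. (cmod (B x))\<^sup>2)"
    by (rule cont_compact_integrable[OF _ Kc]) (use BK in \<open>auto intro!: continuous_intros Bcont\<close>)
  have intAB: "integrable lborel (\<lambda>x. inner (A x) (B x))"
    by (rule cont_compact_integrable[OF _ Kc]) (use AK in \<open>auto intro!: continuous_intros Acont Bcont\<close>)
  have mainL: "(\<integral>x. inner (A x) (B x) \<partial>lborel) = - c * (\<integral>x. (cmod (B x))\<^sup>2 \<partial>lborel)"
    using main integral_lborel[OF intAB] integral_lborel[OF intB] by simp
  have eqR: "of_real (N x powr (-\<alpha>)) * radial_deriv \<nu> N f x
              + of_real ((hom_dim \<nu> - 2 - 2 * \<alpha>) / (2 * N x powr (\<alpha> + 1))) * f x = A x + c *\<^sub>R B x" for x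
  proof (cases "N x powr (\<alpha> + 1) = 0")
    case True then show ?thesis by (simp add: A_def B_def)
  next
    case False
    have "(hom_dim \<nu> - 2 - 2 * \<alpha>) / (2 * N x powr (\<alpha> + 1)) = c / N x powr (\<alpha> + 1)"
      using False by (simp add: c_def field_simps)
    then show ?thesis unfolding A_def B_def scaleR_conv_of_real by (simp add: of_real_divide)
  qed
  have sq: "(cmod (A x + c *\<^sub>R B x))\<^sup>2 = (cmod (A x))\<^sup>2 + c\<^sup>2 * (cmod (B x))\<^sup>2 + 2*c * inner (A x) (B x)" for x
  proof -
    have "(cmod (A x + c *\<^sub>R B x))\<^sup>2 = inner (A x) (A x) + 2*c*inner (A x) (B x) + c\<^sup>2 * inner (B x) (B x)"
      unfolding power2_norm_eq_inner
      by (simp add: inner_add_left inner_add_right inner_commute[of "B x" "A x"] power2_eq_square algebra_simps)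
    then show ?thesis by (simp add: power2_norm_eq_inner)
  qed
  have R: "L2norm_sq (\<lambda>x. of_real (N x powr (-\<alpha>)) * radial_deriv \<nu> N f x
              + of_real ((hom_dim \<nu> - 2 - 2 * \<alpha>) / (2 * N x powr (\<alpha> + 1))) * f x)
        = (\<integral>x. (cmod (A x))\<^sup>2 \<partial>lborel) + c\<^sup>2 * (\<integral>x. (cmod (B x))\<^sup>2 \<partial>lborel)
          + 2*c * (\<integral>x. inner (A x) (B x) \<partial>lborel)"
    unfolding L2norm_sq_def eqR sq
    using intA intB intAB by (simp add: integral_add)
  have L: "L2norm_sq (\<lambda>x. of_real (N x powr (-\<alpha>)) * radial_deriv \<nu> N f x)
           - ((hom_dim \<nu> - 2) / 2 - \<alpha>)\<^sup>2 * L2norm_sq (\<lambda>x. f x / of_real (N x powr (\<alpha> + 1)))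
       = (\<integral>x. (cmod (A x))\<^sup>2 \<partial>lborel) - c\<^sup>2 * (\<integral>x. (cmod (B x))\<^sup>2 \<partial>lborel)"
    unfolding L2norm_sq_def A_def B_def c_def by simp
  show ?thesis unfolding L R mainL by (simp add: algebra_simps power2_eq_square)
qed

end
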